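(* $\Gamma_2(VP_3)/\Gamma_3(VP_3)\cong\mathbb{Z}^9$.
   Context: $VP_3$ is the group with generators $\lambda_{k,l}$, $1\le k\ne l\le 3$, and defining relations $\lambda_{k,i}\lambda_{k,j}\lambda_{i,j}=\lambda_{i,j}\lambda_{k,j}\lambda_{k,i}$ for all pairwise distinct $i,j,k\in\{1,2,3\}$. (Equivalently, it is the kernel of the homomorphism from the virtual braid group $VB_3$ to $S_3$ sending both $\sigma_i$ and $\rho_i$ to the transposition $(i\ i{+}1)$.) For a group $G$, $\Gamma_1(G)=G$, $\Gamma_i(G)=[\Gamma_{i-1}(G),G]$. *)

theory Defs
  imports "HOL-Algebra.Algebra"
begin

text \<open>A letter is a generator together with a sign (True = the generator, False = its inverse).\<close>

inductive pres_eq :: "'g set \<Rightarrow> (('g \<times> bool) list \<times> ('g \<times> bool) list) set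
    \<Rightarrow> ('g \<times> bool) list \<Rightarrow> ('g \<times> bool) list \<Rightarrow> bool"
  for S R where
  refl: "set w \<subseteq> S \<times> UNIV \<Longrightarrow> pres_eq S R w w"
| sym: "pres_eq S R w w' \<Longrightarrow> pres_eq S R w' w"
| trans: "pres_eq S R w1 w2 \<Longrightarrow> pres_eq S R w2 w3 \<Longrightarrow> pres_eq S R w1 w3"
| cancel: "set u \<subseteq> S \<times> UNIV \<Longrightarrow> set v \<subseteq> S \<times> UNIV \<Longrightarrow> a \<in> S \<Longrightarrow>
     pres_eq S R (u @ [(a, b), (a, \<not> b)] @ v) (u @ v)"
| rel: "(l, r) \<in> R \<Longrightarrow> set u \<subseteq> S \<times> UNIV \<Longrightarrow> set v \<subseteq> S \<times> UNIV \<Longrightarrow>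
     pres_eq S R (u @ l @ v) (u @ r @ v)"

definition presented_group :: "'g set \<Rightarrow> (('g \<times> bool) list \<times> ('g \<times> bool) list) set
    \<Rightarrow> ('g \<times> bool) list set monoid" where
  "presented_group S R =
     \<lparr>carrier = {Collect (pres_eq S R w) | w. set w \<subseteq> S \<times> UNIV},
      monoid.mult = (\<lambda>A B. {w. \<exists>a\<in>A. \<exists>b\<in>B. pres_eq S R (a @ b) w}),
      one = Collect (pres_eq S R [])\<rparr>"

text \<open>Generators lambda_{k,l}, 1 <= k /= l <= 3, encoded as the pair (k, l).\<close>

definition vp3_gens :: "(nat \<times> nat) set" where
  "vp3_gens = {(k, l). k \<in> {1, 2, 3} \<and> l \<in> {1, 2, 3} \<and> k \<noteq> l}"

definition vp3_rels :: "(((nat \<times> nat) \<times> bool) list \<times> ((nat \<times> nat) \<times> bool) list) set" where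
  "vp3_rels = {([((k, i), True), ((k, j), True), ((i, j), True)],
                [((i, j), True), ((k, j), True), ((k, i), True)]) | i j k.
               i \<in> {1, 2, 3} \<and> j \<in> {1, 2, 3} \<and> k \<in> {1, 2, 3} \<and>
               i \<noteq> j \<and> j \<noteq> k \<and> i \<noteq> k}"

definition VP3 :: "((nat \<times> nat) \<times> bool) list set monoid" where
  "VP3 = presented_group vp3_gens vp3_rels"

definition commutator_subgroup :: "('a, 'b) monoid_scheme \<Rightarrow> 'a set \<Rightarrow> 'a set \<Rightarrow> 'a set" where
  "commutator_subgroup G H K =
     generate G {x \<otimes>\<^bsub>G\<^esub> y \<otimes>\<^bsub>G\<^esub> inv\<^bsub>G\<^esub> x \<otimes>\<^bsub>G\<^esub> inv\<^bsub>G\<^esub> y | x y. x \<in> H \<and> y \<in> K}"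

text \<open>lower_central G i = Gamma_i(G) for i >= 1 (Gamma_1 = G, Gamma_i = [Gamma_{i-1}, G]);
  the value at 0 is set to G as a harmless convention.\<close>

fun lower_central :: "('a, 'b) monoid_scheme \<Rightarrow> nat \<Rightarrow> 'a set" where
  "lower_central G 0 = carrier G"
| "lower_central G (Suc 0) = carrier G"
| "lower_central G (Suc (Suc n)) = commutator_subgroup G (lower_central G (Suc n)) (carrier G)"

end

theory Submission
  imports Defs "HOL-Library.Function_Algebras"
begin


definition cm :: "('a, 'b) monoid_scheme \<Rightarrow> 'a \<Rightarrow> 'a \<Rightarrow> 'a" where
  "cm G x y = x \<otimes>\<^bsub>G\<^esub> y \<otimes>\<^bsub>G\<^esub> inv\<^bsub>G\<^esub> x \<otimes>\<^bsub>G\<^esub> inv\<^bsub>G\<^esub> y"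

context group
begin

lemma cancel1 [simp]: "x \<in> carrier G \<Longrightarrow> y \<in> carrier G \<Longrightarrow> x \<otimes> (inv x \<otimes> y) = y"
  by (simp add: m_assoc[symmetric])
lemma cancel2 [simp]: "x \<in> carrier G \<Longrightarrow> y \<in> carrier G \<Longrightarrow> inv x \<otimes> (x \<otimes> y) = y"
  by (simp add: m_assoc[symmetric])

lemma cm_closed [simp]: "x \<in> carrier G \<Longrightarrow> y \<in> carrier G \<Longrightarrow> cm G x y \<in> carrier G"
  by (simp add: cm_def)

lemma cm_one_left: "h \<in> carrier G \<Longrightarrow> cm G \<one> h = \<one>"
  by (simp add: cm_def)
lemma cm_one_right: "h \<in> carrier G \<Longrightarrow> cm G h \<one> = \<one>"
  by (simp add: cm_def)

lemma cm_conj: "g \<in> carrier G \<Longrightarrow> x \<in> carrier G \<Longrightarrow> y \<in> carrier G \<Longrightarrow>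
   g \<otimes> cm G x y \<otimes> inv g = cm G (g \<otimes> x \<otimes> inv g) (g \<otimes> y \<otimes> inv g)"
  by (simp add: cm_def m_assoc inv_mult_group)

lemma cm_inv: "x \<in> carrier G \<Longrightarrow> y \<in> carrier G \<Longrightarrow> inv (cm G x y) = cm G y x"
  by (simp add: cm_def m_assoc inv_mult_group)

lemma cm_basic: "x \<in> carrier G \<Longrightarrow> y \<in> carrier G \<Longrightarrow> x \<otimes> y = cm G x y \<otimes> (y \<otimes> x)"
  by (simp add: cm_def m_assoc)

lemma cm_one_iff: "x \<in> carrier G \<Longrightarrow> y \<in> carrier G \<Longrightarrow> cm G x y = \<one> \<longleftrightarrow> x \<otimes> y = y \<otimes> x"
  by (metis cm_basic l_one m_closed r_cancel_one' cm_closed)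

lemma cm_mult_left_gen: "x \<in> carrier G \<Longrightarrow> x' \<in> carrier G \<Longrightarrow> y \<in> carrier G \<Longrightarrow>
   cm G (x \<otimes> x') y = x \<otimes> cm G x' y \<otimes> inv x \<otimes> cm G x y"
  by (simp add: cm_def m_assoc inv_mult_group)

lemma cm_inv_left_gen: "x \<in> carrier G \<Longrightarrow> y \<in> carrier G \<Longrightarrow>
   cm G (inv x) y = inv x \<otimes> inv (cm G x y) \<otimes> x"
  by (simp add: cm_def m_assoc inv_mult_group)

end

lemma (in group_hom) hom_cm: "x \<in> carrier G \<Longrightarrow> y \<in> carrier G \<Longrightarrow> h (cm G x y) = cm H (h x) (h y)"
  by (simp add: cm_def)

locale class2 = group +
  assumes c2: "\<lbrakk>a \<in> carrier G; b \<in> carrier G; c \<in> carrier G\<rbrakk> \<Longrightarrow> cm G (cm G a b) c = \<one>"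
begin

lemma cen: "\<lbrakk>a \<in> carrier G; b \<in> carrier G; c \<in> carrier G\<rbrakk> \<Longrightarrow> cm G a b \<otimes> c = c \<otimes> cm G a b"
  using c2 cm_one_iff by simp

lemma cen_inv: "\<lbrakk>a \<in> carrier G; b \<in> carrier G; c \<in> carrier G\<rbrakk> \<Longrightarrow> inv (cm G a b) \<otimes> c = c \<otimes> inv (cm G a b)"
  using cen[of b a c] by (simp add: cm_inv)

lemma cen_conj: "\<lbrakk>a \<in> carrier G; b \<in> carrier G; x \<in> carrier G\<rbrakk> \<Longrightarrow> x \<otimes> cm G a b \<otimes> inv x = cm G a b"
proof -
  assume a: "a \<in> carrier G" "b \<in> carrier G" "x \<in> carrier G"
  have "x \<otimes> cm G a b \<otimes> inv x = cm G a b \<otimes> x \<otimes> inv x" using a cen[of a b x] by simp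
  then show ?thesis using a by (simp add: m_assoc)
qed

lemma cen_conj_inv: "\<lbrakk>a \<in> carrier G; b \<in> carrier G; x \<in> carrier G\<rbrakk> \<Longrightarrow> inv x \<otimes> inv (cm G a b) \<otimes> x = inv (cm G a b)"
proof -
  assume a: "a \<in> carrier G" "b \<in> carrier G" "x \<in> carrier G"
  have "inv x \<otimes> inv (cm G a b) \<otimes> x = inv (cm G a b) \<otimes> inv x \<otimes> x" using a cen_inv[of a b "inv x"] by simp
  then show ?thesis using a by (simp add: m_assoc)
qed

lemma cm_mult_left: "x \<in> carrier G \<Longrightarrow> x' \<in> carrier G \<Longrightarrow> y \<in> carrier G \<Longrightarrow>
   cm G (x \<otimes> x') y = cm G x' y \<otimes> cm G x y"
  by (simp add: cm_mult_left_gen cen_conj)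

lemma cm_inv_left: "x \<in> carrier G \<Longrightarrow> y \<in> carrier G \<Longrightarrow> cm G (inv x) y = inv (cm G x y)"
  by (simp add: cm_inv_left_gen cen_conj_inv)

lemma cm_mult_right: "x \<in> carrier G \<Longrightarrow> y \<in> carrier G \<Longrightarrow> y' \<in> carrier G \<Longrightarrow>
   cm G x (y \<otimes> y') = cm G x y \<otimes> cm G x y'"
proof -
  assume a: "x \<in> carrier G" "y \<in> carrier G" "y' \<in> carrier G"
  have "cm G x (y \<otimes> y') = inv (cm G (y \<otimes> y') x)" using a by (simp add: cm_inv)
  also have "\<dots> = inv (cm G y' x \<otimes> cm G y x)" using a by (simp add: cm_mult_left)
  also have "\<dots> = inv (cm G y x) \<otimes> inv (cm G y' x)" using a by (simp add: inv_mult_group)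
  also have "\<dots> = cm G x y \<otimes> cm G x y'" using a by (simp add: cm_inv)
  finally show ?thesis .
qed

lemma cm_inv_right: "x \<in> carrier G \<Longrightarrow> y \<in> carrier G \<Longrightarrow> cm G x (inv y) = inv (cm G x y)"
proof -
  assume a: "x \<in> carrier G" "y \<in> carrier G"
  have "cm G x (inv y) = inv (cm G (inv y) x)" using a by (simp add: cm_inv)
  also have "\<dots> = cm G y x" using a by (simp add: cm_inv_left)
  also have "\<dots> = inv (cm G x y)" using a by (simp add: cm_inv)
  finally show ?thesis .
qed

lemma cen_swap: "\<lbrakk>a \<in> carrier G; b \<in> carrier G; y \<in> carrier G; w \<in> carrier G\<rbrakk> \<Longrightarrow>
   y \<otimes> (cm G a b \<otimes> w) = cm G a b \<otimes> (y \<otimes> w)"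
proof -
  assume a: "a \<in> carrier G" "b \<in> carrier G" "y \<in> carrier G" "w \<in> carrier G"
  have "y \<otimes> (cm G a b \<otimes> w) = (y \<otimes> cm G a b) \<otimes> w" using a by (simp only: m_assoc cm_closed)
  also have "\<dots> = (cm G a b \<otimes> y) \<otimes> w" using a cen[of a b y] by simp
  also have "\<dots> = cm G a b \<otimes> (y \<otimes> w)" using a by (simp only: m_assoc cm_closed)
  finally show ?thesis .
qed

lemma triple: "x \<in> carrier G \<Longrightarrow> y \<in> carrier G \<Longrightarrow> z \<in> carrier G \<Longrightarrow>
   x \<otimes> y \<otimes> z = cm G x y \<otimes> cm G x z \<otimes> cm G y z \<otimes> (z \<otimes> y \<otimes> x)"
proof -
  assume a: "x \<in> carrier G" "y \<in> carrier G" "z \<in> carrier G"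
  have "x \<otimes> y \<otimes> z = cm G x y \<otimes> (y \<otimes> x) \<otimes> z" using a by (simp only: cm_basic[of x y])
  also have "\<dots> = cm G x y \<otimes> (y \<otimes> (x \<otimes> z))" using a by (simp only: m_assoc m_closed cm_closed)
  also have "\<dots> = cm G x y \<otimes> (y \<otimes> (cm G x z \<otimes> (z \<otimes> x)))" using a by (simp only: cm_basic[of x z])
  also have "\<dots> = cm G x y \<otimes> (cm G x z \<otimes> (y \<otimes> (z \<otimes> x)))"
    using a by (simp only: cen_swap[of x z y "z \<otimes> x"] m_closed)
  also have "\<dots> = cm G x y \<otimes> (cm G x z \<otimes> ((y \<otimes> z) \<otimes> x))" using a by (simp only: m_assoc m_closed)
  also have "\<dots> = cm G x y \<otimes> (cm G x z \<otimes> ((cm G y z \<otimes> (z \<otimes> y)) \<otimes> x))"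
    using a by (simp only: cm_basic[of y z])
  also have "\<dots> = cm G x y \<otimes> cm G x z \<otimes> cm G y z \<otimes> (z \<otimes> y \<otimes> x)"
    using a by (simp only: m_assoc m_closed cm_closed)
  finally show ?thesis .
qed

lemma rel_prod: "x \<in> carrier G \<Longrightarrow> y \<in> carrier G \<Longrightarrow> z \<in> carrier G \<Longrightarrow>
   x \<otimes> y \<otimes> z = z \<otimes> y \<otimes> x \<Longrightarrow> cm G x y \<otimes> cm G x z \<otimes> cm G y z = \<one>"
proof -
  assume a: "x \<in> carrier G" "y \<in> carrier G" "z \<in> carrier G" and e: "x \<otimes> y \<otimes> z = z \<otimes> y \<otimes> x"
  have "cm G x y \<otimes> cm G x z \<otimes> cm G y z \<otimes> (z \<otimes> y \<otimes> x) = z \<otimes> y \<otimes> x"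
    using triple[OF a] e by simp
  then show ?thesis using a r_cancel_one[of "z \<otimes> y \<otimes> x" "cm G x y \<otimes> cm G x z \<otimes> cm G y z"] by simp
qed

end



context group
begin

definition "A2 = {cm G x y | x y. x \<in> carrier G \<and> y \<in> carrier G}"
definition "G2 = generate G A2"
definition "A3 = {cm G x y | x y. x \<in> G2 \<and> y \<in> carrier G}"
definition "G3 = generate G A3"

lemma lc2: "lower_central G 2 = G2"
  by (simp add: numeral_2_eq_2 commutator_subgroup_def G2_def A2_def cm_def)

lemma lc3: "lower_central G 3 = G3"
  using lc2 by (simp add: numeral_3_eq_3 numeral_2_eq_2 commutator_subgroup_def G3_def A3_def cm_def)

lemma A2_sub: "A2 \<subseteq> carrier G" by (auto simp: A2_def)

lemma G2_subgroup: "subgroup G2 G"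
  unfolding G2_def by (rule generate_is_subgroup[OF A2_sub])

lemma G2_normal: "G2 \<lhd> G"
  unfolding G2_def
proof (rule normal_generateI[OF A2_sub])
  fix h g assume "h \<in> A2" "g \<in> carrier G"
  then obtain x y where xy: "h = cm G x y" "x \<in> carrier G" "y \<in> carrier G" "g \<in> carrier G"
    by (auto simp: A2_def)
  then show "g \<otimes> h \<otimes> inv g \<in> A2" unfolding A2_def
    by (intro CollectI exI[of _ "g \<otimes> x \<otimes> inv g"] exI[of _ "g \<otimes> y \<otimes> inv g"]) (simp add: cm_conj)
qed

lemma G2_conj: "g \<in> carrier G \<Longrightarrow> x \<in> G2 \<Longrightarrow> g \<otimes> x \<otimes> inv g \<in> G2"
proof -
  have "\<forall>x\<in>carrier G. \<forall>h\<in>G2. x \<otimes> h \<otimes> inv x \<in> G2" using G2_normal by (simp add: normal_inv_iff)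
  moreover assume "g \<in> carrier G" "x \<in> G2"
  ultimately show ?thesis by blast
qed

lemma G2_carrier: "x \<in> G2 \<Longrightarrow> x \<in> carrier G"
  by (rule subgroup.mem_carrier[OF G2_subgroup])

lemma A3_sub: "A3 \<subseteq> carrier G" by (auto simp: A3_def G2_carrier)

lemma G3_subgroup: "subgroup G3 G"
  unfolding G3_def by (rule generate_is_subgroup[OF A3_sub])

lemma G3_normal: "G3 \<lhd> G"
  unfolding G3_def
proof (rule normal_generateI[OF A3_sub])
  fix h g assume "h \<in> A3" "g \<in> carrier G"
  then obtain x y where xy: "h = cm G x y" "x \<in> G2" "y \<in> carrier G" "g \<in> carrier G"
    by (auto simp: A3_def)
  then show "g \<otimes> h \<otimes> inv g \<in> A3" unfolding A3_def
    by (intro CollectI exI[of _ "g \<otimes> x \<otimes> inv g"] exI[of _ "g \<otimes> y \<otimes> inv g"]) (simp add: cm_conj G2_carrier G2_conj)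
qed

lemma A3_G2: "A3 \<subseteq> G2"
proof
  fix c assume "c \<in> A3"
  then obtain x y where xy: "x \<in> G2" "y \<in> carrier G" "c = cm G x y" by (auto simp: A3_def)
  have x: "x \<in> carrier G" using xy G2_carrier by auto
  have "y \<otimes> inv x \<otimes> inv y \<in> G2"
    using G2_conj[OF xy(2)] subgroup.m_inv_closed[OF G2_subgroup xy(1)] by simp
  then have "x \<otimes> (y \<otimes> inv x \<otimes> inv y) \<in> G2"
    using subgroup.m_closed[OF G2_subgroup xy(1)] by simp
  then show "c \<in> G2" using xy x by (simp add: cm_def m_assoc)
qed

lemma G3_G2: "G3 \<subseteq> G2"
  unfolding G3_def by (rule generate_subgroup_incl[OF A3_G2 G2_subgroup])

lemma Q_group: "group (G Mod G3)"
  using G3_normal normal.factorgroup_is_group by blast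

lemma pi_hom: "(\<lambda>a. G3 #> a) \<in> hom G (G Mod G3)"
  using G3_normal normal.r_coset_hom_Mod by blast

lemma pi_group_hom: "group_hom G (G Mod G3) (\<lambda>a. G3 #> a)"
  by (simp add: group_hom_def group_hom_axioms_def pi_hom Q_group is_group)

lemma pi_G3: "h \<in> G3 \<Longrightarrow> G3 #> h = G3"
  using subgroup.rcos_const[OF G3_subgroup is_group] .

lemma Q_class2: "class2 (G Mod G3)"
proof -
  interpret Q: group "G Mod G3" by (rule Q_group)
  interpret P: group_hom G "G Mod G3" "\<lambda>a. G3 #> a" by (rule pi_group_hom)
  show ?thesis
  proof (unfold_locales)
    fix U V W assume "U \<in> carrier (G Mod G3)" "V \<in> carrier (G Mod G3)" "W \<in> carrier (G Mod G3)"
    then obtain a b c where abc: "a \<in> carrier G" "b \<in> carrier G" "c \<in> carrier G"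
      "U = G3 #> a" "V = G3 #> b" "W = G3 #> c"
      by (auto simp: carrier_FactGroup)
    have "cm G (cm G a b) c \<in> G3"
      unfolding G3_def A3_def G2_def A2_def using abc
      by (intro generate.incl CollectI exI[of _ "cm G a b"] exI[of _ c]) (auto intro: generate.incl)
    then have "G3 #> cm G (cm G a b) c = \<one>\<^bsub>G Mod G3\<^esub>" by (simp add: pi_G3)
    then show "cm (G Mod G3) (cm (G Mod G3) U V) W = \<one>\<^bsub>G Mod G3\<^esub>"
      using abc by (simp add: P.hom_cm[symmetric])
  qed
qed

end



definition rl :: "('a, 'b) monoid_scheme \<Rightarrow> nat list \<Rightarrow> (nat \<Rightarrow> 'a) \<Rightarrow> (nat \<Rightarrow> int) \<Rightarrow> 'a" where
  "rl G l f z = foldr (\<lambda>i acc. f i [^]\<^bsub>G\<^esub> z i \<otimes>\<^bsub>G\<^esub> acc) l \<one>\<^bsub>G\<^esub>"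

lemma rl_Nil [simp]: "rl G [] f z = \<one>\<^bsub>G\<^esub>" by (simp add: rl_def)
lemma rl_Cons [simp]: "rl G (i # l) f z = f i [^]\<^bsub>G\<^esub> z i \<otimes>\<^bsub>G\<^esub> rl G l f z" by (simp add: rl_def)

context group
begin

lemma rl_closed [simp]: "(\<And>i. i \<in> set l \<Longrightarrow> f i \<in> carrier G) \<Longrightarrow> rl G l f z \<in> carrier G"
  by (induction l) auto

lemma inv_commute_x:
  assumes a: "a \<in> carrier G" "y \<in> carrier G" "a \<otimes> y = y \<otimes> a"
  shows "inv a \<otimes> y = y \<otimes> inv a"
proof -
  have "inv a \<otimes> y = inv a \<otimes> ((y \<otimes> a) \<otimes> inv a)" using a(1,2) by (simp add: m_assoc)
  also have "\<dots> = inv a \<otimes> ((a \<otimes> y) \<otimes> inv a)" using a by simp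
  also have "\<dots> = y \<otimes> inv a" using a(1,2) by (simp add: m_assoc)
  finally show ?thesis .
qed

lemma ipow_comm:
  assumes a: "c \<in> carrier G" "y \<in> carrier G" "c \<otimes> y = y \<otimes> c"
  shows "c [^] (n::int) \<otimes> y = y \<otimes> c [^] n"
proof (cases "n \<ge> 0")
  case True
  then obtain k where "n = int k" by (metis nonneg_eq_int)
  then show ?thesis using a group_commutes_pow[of c y k] by (simp add: int_pow_int)
next
  case False
  then obtain k where k: "n = - int k" by (metis le_cases neg_0_le_iff_le nonneg_eq_int minus_minus)
  have "c [^] n = inv (c [^] k)" using k a by (simp add: int_pow_neg_int)
  then show ?thesis using a group_commutes_pow[of c y k] inv_commute_x[of "c [^] k" y] by simp
qed

lemma rl_add:
  assumes "\<And>i. i \<in> set l \<Longrightarrow> f i \<in> carrier G \<and> (\<forall>y\<in>carrier G. f i \<otimes> y = y \<otimes> f i)"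
  shows "rl G l f (z + w) = rl G l f z \<otimes> rl G l f w"
  using assms
proof (induction l)
  case (Cons i l)
  have f: "f i \<in> carrier G" "\<forall>y\<in>carrier G. f i \<otimes> y = y \<otimes> f i" using Cons.prems by auto
  have c: "rl G l f z \<in> carrier G" "rl G l f w \<in> carrier G" using Cons.prems by auto
  have IH: "rl G l f (z + w) = rl G l f z \<otimes> rl G l f w"
    by (rule Cons.IH) (use Cons.prems in auto)
  have sw: "f i [^] w i \<otimes> rl G l f z = rl G l f z \<otimes> f i [^] w i"
    using ipow_comm f c by auto
  have "rl G (i # l) f (z + w) = f i [^] z i \<otimes> f i [^] w i \<otimes> (rl G l f z \<otimes> rl G l f w)"
    using f by (simp add: IH int_pow_mult)
  also have "\<dots> = f i [^] z i \<otimes> ((f i [^] w i \<otimes> rl G l f z) \<otimes> rl G l f w)"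
    using f c by (simp add: m_assoc)
  also have "\<dots> = f i [^] z i \<otimes> ((rl G l f z \<otimes> f i [^] w i) \<otimes> rl G l f w)"
    by (simp only: sw)
  also have "\<dots> = rl G (i # l) f z \<otimes> rl G (i # l) f w"
    using f c by (simp add: m_assoc)
  finally show ?case .
qed simp

lemma rl_zero: "(\<And>j. j \<in> set l \<Longrightarrow> z j = 0) \<Longrightarrow> rl G l f z = \<one>"
  by (induction l) auto

lemma rl_cong: "(\<And>j. j \<in> set l \<Longrightarrow> z j = w j) \<Longrightarrow> rl G l f z = rl G l f w"
  by (induction l) auto

lemma rl_neg:
  assumes "\<And>i. i \<in> set l \<Longrightarrow> f i \<in> carrier G \<and> (\<forall>y\<in>carrier G. f i \<otimes> y = y \<otimes> f i)"
  shows "rl G l f (- z) = inv (rl G l f z)"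
proof -
  have c: "rl G l f z \<in> carrier G" "rl G l f (- z) \<in> carrier G" using assms by auto
  have "rl G l f (- z + z) = rl G l f (- z) \<otimes> rl G l f z" by (rule rl_add) (rule assms)
  then have "rl G l f (- z) \<otimes> rl G l f z = rl G l f (- z + z)" by simp
  also have "\<dots> = \<one>" by (rule rl_zero) simp
  finally show ?thesis using c by (intro inv_equality[symmetric]) auto
qed

lemma rl_e:
  assumes "distinct l" "i \<in> set l" "\<And>j. j \<in> set l \<Longrightarrow> f j \<in> carrier G"
  shows "rl G l f (\<lambda>j. if j = i then 1 else 0) = f i"
  using assms
proof (induction l)
  case (Cons k l)
  show ?case
  proof (cases "k = i")
    case True
    then have "i \<notin> set l" using Cons by auto
    then have "rl G l f (\<lambda>j. if j = i then 1 else 0) = \<one>" by (intro rl_zero) auto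
    then show ?thesis using True Cons.prems by simp
  next
    case False
    then show ?thesis using Cons by simp
  qed
qed simp

lemma rl_sub: "subgroup H G \<Longrightarrow> (\<And>i. i \<in> set l \<Longrightarrow> f i \<in> H) \<Longrightarrow> rl G l f z \<in> H"
  by (induction l) (auto intro: subgroup.m_closed subgroup.one_closed subgroup_int_pow_closed)

end

lemma (in group_hom) hom_rl: "(\<And>i. i \<in> set l \<Longrightarrow> f i \<in> carrier G) \<Longrightarrow> h (rl G l f z) = rl H l (h \<circ> f) z"
  by (induction l) (auto simp: hom_int_pow)



abbreviation peq where "peq \<equiv> pres_eq vp3_gens vp3_rels"
abbreviation valid :: "((nat \<times> nat) \<times> bool) list \<Rightarrow> bool" where
  "valid w \<equiv> set w \<subseteq> vp3_gens \<times> UNIV"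

lemma rels_valid: "(l, r) \<in> vp3_rels \<Longrightarrow> valid l \<and> valid r"
  by (auto simp: vp3_rels_def vp3_gens_def)

lemma peq_valid: "peq w w' \<Longrightarrow> valid w \<and> valid w'"
  by (induction rule: pres_eq.induct) (auto dest: rels_valid)

lemma peq_cong: "peq w w' \<Longrightarrow> valid u \<Longrightarrow> valid v \<Longrightarrow> peq (u @ w @ v) (u @ w' @ v)"
proof (induction arbitrary: u v rule: pres_eq.induct)
  case (refl w) then show ?case by (intro pres_eq.refl) auto
next
  case (sym w w') then show ?case by (blast intro: pres_eq.sym)
next
  case (trans w1 w2 w3) then show ?case by (blast intro: pres_eq.trans)
next
  case (cancel u' v' a b)
  have "peq ((u @ u') @ [(a, b), (a, \<not> b)] @ (v' @ v)) ((u @ u') @ (v' @ v))"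
    using cancel by (intro pres_eq.cancel) auto
  then show ?case by simp
next
  case (rel l r u' v')
  have "peq ((u @ u') @ l @ (v' @ v)) ((u @ u') @ r @ (v' @ v))"
    using rel by (intro pres_eq.rel) auto
  then show ?case by simp
qed

lemma peq_cong2: "peq a a' \<Longrightarrow> peq b b' \<Longrightarrow> peq (a @ b) (a' @ b')"
proof -
  assume A: "peq a a'" and B: "peq b b'"
  have "peq ([] @ a @ b) ([] @ a' @ b)" using A B peq_valid by (intro peq_cong) auto
  moreover have "peq (a' @ b @ []) (a' @ b' @ [])" using A B peq_valid by (intro peq_cong) auto
  ultimately show ?thesis by (auto intro: pres_eq.trans)
qed

definition cls :: "((nat \<times> nat) \<times> bool) list \<Rightarrow> ((nat \<times> nat) \<times> bool) list set" where
  "cls w = Collect (peq w)"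

lemma carrier_VP3: "carrier VP3 = {cls w | w. valid w}"
  by (simp add: VP3_def presented_group_def cls_def)

lemma one_VP3: "\<one>\<^bsub>VP3\<^esub> = cls []"
  by (simp add: VP3_def presented_group_def cls_def)

lemma cls_eq: "valid w \<Longrightarrow> valid w' \<Longrightarrow> cls w = cls w' \<longleftrightarrow> peq w w'"
proof
  assume v: "valid w" "valid w'" and "cls w = cls w'"
  moreover have "w \<in> cls w" using v by (simp add: cls_def pres_eq.refl)
  ultimately have "peq w' w" by (simp add: cls_def)
  then show "peq w w'" by (rule pres_eq.sym)
next
  assume "peq w w'"
  then have "peq w x \<longleftrightarrow> peq w' x" for x
    using pres_eq.sym pres_eq.trans by metis
  then show "cls w = cls w'" by (auto simp: cls_def)
qed

lemma mult_VP3: "valid a \<Longrightarrow> valid b \<Longrightarrow> cls a \<otimes>\<^bsub>VP3\<^esub> cls b = cls (a @ b)"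
proof -
  assume a: "valid a" and b: "valid b"
  have "{w. \<exists>a'\<in>cls a. \<exists>b'\<in>cls b. peq (a' @ b') w} = cls (a @ b)"
  proof (rule equalityI; rule subsetI)
    fix w assume "w \<in> {w. \<exists>a'\<in>cls a. \<exists>b'\<in>cls b. peq (a' @ b') w}"
    then obtain a' b' where "peq a a'" "peq b b'" "peq (a' @ b') w" by (auto simp: cls_def)
    then have "peq (a @ b) w" by (meson peq_cong2 pres_eq.trans)
    then show "w \<in> cls (a @ b)" by (simp add: cls_def)
  next
    fix w assume "w \<in> cls (a @ b)"
    moreover have "a \<in> cls a" "b \<in> cls b" using a b by (auto simp: cls_def intro: pres_eq.refl)
    ultimately show "w \<in> {w. \<exists>a'\<in>cls a. \<exists>b'\<in>cls b. peq (a' @ b') w}" by (auto simp: cls_def)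
  qed
  then show ?thesis by (simp add: VP3_def presented_group_def cls_def)
qed

definition winv :: "((nat \<times> nat) \<times> bool) list \<Rightarrow> ((nat \<times> nat) \<times> bool) list" where
  "winv w = rev (map (\<lambda>(a, b). (a, \<not> b)) w)"

lemma winv_valid: "valid w \<Longrightarrow> valid (winv w)"
  by (auto simp: winv_def)

lemma winv_cancel: "valid w \<Longrightarrow> peq (winv w @ w) []"
proof (induction w)
  case Nil then show ?case by (auto simp: winv_def intro: pres_eq.refl)
next
  case (Cons x w)
  obtain a b where x: "x = (a, b)" by (cases x) auto
  have v: "valid w" "a \<in> vp3_gens" using Cons x by auto
  have "peq (winv w @ [(a, \<not> b), (a, \<not> \<not> b)] @ w) (winv w @ w)"
    using v winv_valid by (intro pres_eq.cancel) auto
  then have "peq (winv (x # w) @ x # w) (winv w @ w)" by (simp add: x winv_def)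
  then show ?case using Cons v by (blast intro: pres_eq.trans)
qed

lemma group_VP3: "group VP3"
proof (rule groupI)
  fix x y assume "x \<in> carrier VP3" "y \<in> carrier VP3"
  then show "x \<otimes>\<^bsub>VP3\<^esub> y \<in> carrier VP3"
    by (fastforce simp: carrier_VP3 mult_VP3)
next
  show "\<one>\<^bsub>VP3\<^esub> \<in> carrier VP3" by (auto simp: carrier_VP3 one_VP3)
next
  fix x y z assume "x \<in> carrier VP3" "y \<in> carrier VP3" "z \<in> carrier VP3"
  then show "x \<otimes>\<^bsub>VP3\<^esub> y \<otimes>\<^bsub>VP3\<^esub> z = x \<otimes>\<^bsub>VP3\<^esub> (y \<otimes>\<^bsub>VP3\<^esub> z)"
    by (fastforce simp: carrier_VP3 mult_VP3)
next
  fix x assume "x \<in> carrier VP3"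
  then show "\<one>\<^bsub>VP3\<^esub> \<otimes>\<^bsub>VP3\<^esub> x = x"
    by (auto simp: carrier_VP3 mult_VP3 one_VP3)
next
  fix x assume "x \<in> carrier VP3"
  then obtain w where w: "valid w" "x = cls w" by (auto simp: carrier_VP3)
  show "\<exists>y\<in>carrier VP3. y \<otimes>\<^bsub>VP3\<^esub> x = \<one>\<^bsub>VP3\<^esub>"
  proof (intro bexI)
    show "cls (winv w) \<otimes>\<^bsub>VP3\<^esub> x = \<one>\<^bsub>VP3\<^esub>"
      using w winv_valid winv_cancel by (simp add: mult_VP3 one_VP3 cls_eq)
    show "cls (winv w) \<in> carrier VP3" using w winv_valid by (auto simp: carrier_VP3)
  qed
qed



type_synonym nel = "((nat \<times> nat) \<Rightarrow> int) \<times> (nat \<Rightarrow> int)"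

definition bet :: "((nat \<times> nat) \<times> (nat \<times> nat) \<times> (nat \<Rightarrow> int)) list
   \<Rightarrow> ((nat \<times> nat) \<Rightarrow> int) \<Rightarrow> ((nat \<times> nat) \<Rightarrow> int) \<Rightarrow> (nat \<Rightarrow> int)" where
  "bet L a b = (\<lambda>i. sum_list (map (\<lambda>(g, h, c). a g * b h * c i) L))"

lemma bet_add1: "bet L (a + a') b = bet L a b + bet L a' b"
  unfolding bet_def fun_eq_iff by (induction L) (auto simp: algebra_simps split: prod.splits)
lemma bet_add2: "bet L a (b + b') = bet L a b + bet L a b'"
  unfolding bet_def fun_eq_iff by (induction L) (auto simp: algebra_simps split: prod.splits)
lemma bet_neg1: "bet L (- a) b = - bet L a b"
  unfolding bet_def fun_eq_iff by (induction L) (auto simp: algebra_simps split: prod.splits)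
lemma bet_neg2: "bet L a (- b) = - bet L a b"
  unfolding bet_def fun_eq_iff by (induction L) (auto simp: algebra_simps split: prod.splits)
lemma bet_zero1: "bet L 0 b = 0"
  unfolding bet_def fun_eq_iff by (induction L) (auto simp: algebra_simps split: prod.splits)
lemma bet_zero2: "bet L a 0 = 0"
  unfolding bet_def fun_eq_iff by (induction L) (auto simp: algebra_simps split: prod.splits)

definition e :: "nat \<Rightarrow> nat \<Rightarrow> int" where "e j = (\<lambda>i. if i = j then 1 else 0)"

definition PL :: "((nat \<times> nat) \<times> (nat \<times> nat) \<times> (nat \<Rightarrow> int)) list" where
  "PL = [((1,2),(2,1), e 0), ((1,2),(1,3), e 1), ((1,2),(3,2), e 2), ((2,1),(3,1), e 3),
         ((2,1),(2,3), e 4), ((1,3),(3,1), e 5), ((1,3),(2,3), e 6), ((3,1),(3,2), e 7),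
         ((2,3),(3,2), e 8),
         ((1,2),(3,1), e 7 - e 2), ((1,2),(2,3), - e 6 - e 1), ((2,1),(1,3), e 6 - e 4),
         ((2,1),(3,2), - e 3 - e 7), ((1,3),(3,2), e 1 - e 2), ((3,1),(2,3), e 3 - e 4)]"

abbreviation "B \<equiv> bet PL"

definition Nm :: "nel \<Rightarrow> nel \<Rightarrow> nel" where
  "Nm p q = (fst p + fst q, snd p + snd q + B (fst p) (fst q))"

definition NG :: "nel monoid" where
  "NG = \<lparr>carrier = UNIV, monoid.mult = Nm, one = (0, 0)\<rparr>"

lemma NG_carrier [simp]: "carrier NG = UNIV" by (simp add: NG_def)
lemma NG_mult: "x \<otimes>\<^bsub>NG\<^esub> y = Nm x y" by (simp add: NG_def)
lemma NG_one: "\<one>\<^bsub>NG\<^esub> = (0, 0)" by (simp add: NG_def)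
lemmas NG_simps = NG_carrier NG_mult NG_one

lemma group_NG: "group NG"
proof (rule groupI)
  fix x y z :: nel
  show "x \<otimes>\<^bsub>NG\<^esub> y \<otimes>\<^bsub>NG\<^esub> z = x \<otimes>\<^bsub>NG\<^esub> (y \<otimes>\<^bsub>NG\<^esub> z)"
    by (simp add: NG_simps Nm_def bet_add1 bet_add2 ac_simps)
next
  fix x :: nel
  show "\<one>\<^bsub>NG\<^esub> \<otimes>\<^bsub>NG\<^esub> x = x" by (simp add: NG_simps Nm_def bet_zero1)
  show "\<exists>y\<in>carrier NG. y \<otimes>\<^bsub>NG\<^esub> x = \<one>\<^bsub>NG\<^esub>"
    by (rule bexI[of _ "(- fst x, - snd x + B (fst x) (fst x))"])
       (auto simp: NG_simps Nm_def bet_neg1)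
qed auto

interpretation N: group NG by (rule group_NG)

lemma inv_NG: "inv\<^bsub>NG\<^esub> (a, z) = (- a, - z + B a a)"
  by (rule N.inv_equality) (auto simp: NG_simps Nm_def bet_neg1)

definition dl :: "nat \<times> nat \<Rightarrow> (nat \<times> nat) \<Rightarrow> int" where
  "dl p = (\<lambda>x. if x = p then 1 else 0)"

definition ev :: "(nat \<times> nat) \<times> bool \<Rightarrow> nel" where
  "ev x = (if snd x then (dl (fst x), 0) else inv\<^bsub>NG\<^esub> (dl (fst x), 0))"

definition evw :: "((nat \<times> nat) \<times> bool) list \<Rightarrow> nel" where
  "evw w = foldr (\<lambda>x acc. ev x \<otimes>\<^bsub>NG\<^esub> acc) w \<one>\<^bsub>NG\<^esub>"

lemma evw_append: "evw (u @ v) = evw u \<otimes>\<^bsub>NG\<^esub> evw v"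
  unfolding evw_def by (induction u) (simp_all add: N.m_assoc)

lemma evw_cancel: "ev (a, b) \<otimes>\<^bsub>NG\<^esub> ev (a, \<not> b) = \<one>\<^bsub>NG\<^esub>"
  unfolding ev_def by auto

lemma bet_dl: "bet L (dl p) (dl q) = (\<lambda>i. sum_list (map (\<lambda>(g, h, c). if g = p \<and> h = q then c i else 0) L))"
  unfolding bet_def dl_def fun_eq_iff by (induction L) auto

lemma evw3: "evw [(x, True), (y, True), (z, True)] =
   (dl x + dl y + dl z, B (dl y) (dl z) + B (dl x) (dl y) + B (dl x) (dl z))"
  by (simp add: evw_def ev_def NG_simps Nm_def bet_add2 bet_zero1 bet_zero2 ac_simps)

lemma evw_rel: "(l, r) \<in> vp3_rels \<Longrightarrow> evw l = evw r"
  unfolding vp3_rels_def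
  apply (elim CollectE exE conjE)
  apply (simp only: evw3 Pair_inject prod.inject)
  apply (rule conjI, simp add: ac_simps)
  apply (simp only: bet_dl)
  apply (elim insertE emptyE)
  apply (simp_all add: PL_def e_def fun_eq_iff)
  done



lemma evw_peq: "peq w w' \<Longrightarrow> evw w = evw w'"
proof (induction rule: pres_eq.induct)
  case (cancel u v a b)
  have "evw [(a, b), (a, \<not> b)] = \<one>\<^bsub>NG\<^esub>"
    using evw_cancel[of a b] by (simp add: evw_def)
  then show ?case by (simp only: evw_append) simp
next
  case (rel l r u v)
  then show ?case by (simp add: evw_append evw_rel)
qed auto

definition th :: "((nat \<times> nat) \<times> bool) list set \<Rightarrow> nel" where
  "th U = evw (SOME w. w \<in> U)"

lemma th_cls: "valid w \<Longrightarrow> th (cls w) = evw w"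
proof -
  assume v: "valid w"
  have "w \<in> cls w" using v by (simp add: cls_def pres_eq.refl)
  then have "(SOME w'. w' \<in> cls w) \<in> cls w" by (rule someI)
  then have "peq w (SOME w'. w' \<in> cls w)" by (simp add: cls_def)
  then show ?thesis unfolding th_def using evw_peq by metis
qed

interpretation V: group VP3 by (rule group_VP3)

lemma th_hom: "th \<in> hom VP3 NG"
  unfolding hom_def
proof (safe)
  fix x y assume "x \<in> carrier VP3" "y \<in> carrier VP3"
  then obtain a b where "valid a" "x = cls a" "valid b" "y = cls b" by (auto simp: carrier_VP3)
  then show "th (x \<otimes>\<^bsub>VP3\<^esub> y) = th x \<otimes>\<^bsub>NG\<^esub> th y"
    by (simp add: mult_VP3 th_cls evw_append)
qed auto

interpretation TH: group_hom VP3 NG th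
  by (simp add: group_hom_def group_hom_axioms_def group_VP3 group_NG th_hom)




definition gen :: "nat \<times> nat \<Rightarrow> ((nat \<times> nat) \<times> bool) list set" where
  "gen p = cls [(p, True)]"

definition KP :: "((nat \<times> nat) \<times> (nat \<times> nat)) list" where
  "KP = [((1,2),(2,1)), ((1,2),(1,3)), ((1,2),(3,2)), ((2,1),(3,1)), ((2,1),(2,3)),
         ((1,3),(3,1)), ((1,3),(2,3)), ((3,1),(3,2)), ((2,3),(3,2))]"

definition cv :: "nat \<Rightarrow> ((nat \<times> nat) \<times> bool) list set" where
  "cv i = cm VP3 (gen (fst (KP ! i))) (gen (snd (KP ! i)))"

lemma vp3_gens_eq: "vp3_gens = {(1,2),(1,3),(2,1),(2,3),(3,1),(3,2)}"
  by (auto simp: vp3_gens_def)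

lemma gen_carrier: "p \<in> vp3_gens \<Longrightarrow> gen p \<in> carrier VP3"
  by (auto simp: gen_def carrier_VP3)

lemma th_gen: "p \<in> vp3_gens \<Longrightarrow> th (gen p) = (dl p, 0)"
  by (simp add: gen_def th_cls evw_def ev_def NG_simps Nm_def bet_zero2)

lemma KP_gens: "i < 9 \<Longrightarrow> fst (KP ! i) \<in> vp3_gens \<and> snd (KP ! i) \<in> vp3_gens"
proof -
  assume "i < 9"
  then have "i \<in> {0,1,2,3,4,5,6,7,8}" by auto
  then show ?thesis by (elim insertE emptyE) (simp_all add: KP_def vp3_gens_eq)
qed

lemma cv_carrier: "i < 9 \<Longrightarrow> cv i \<in> carrier VP3"
  using KP_gens gen_carrier by (simp add: cv_def)

lemma cm_NG: "cm NG (a, 0) (b, 0) = (0, B a b - B b a)"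
  by (simp add: cm_def inv_NG NG_simps Nm_def bet_add1 bet_add2 bet_neg1 bet_neg2 bet_zero1 bet_zero2)

lemma fst_cm_NG: "fst (cm NG p q) = 0"
  by (cases p, cases q) (simp add: cm_def inv_NG NG_simps Nm_def)

lemma cm_NG_cen: "cm NG (0, z) q = (0, 0)"
  by (cases q) (simp add: cm_def inv_NG NG_simps Nm_def bet_add1 bet_add2 bet_neg1 bet_neg2 bet_zero1 bet_zero2)

lemma th_cv: "i < 9 \<Longrightarrow> th (cv i) = (0, e i)"
proof -
  assume i: "i < 9"
  have "th (cv i) = cm NG (th (gen (fst (KP ! i)))) (th (gen (snd (KP ! i))))"
    using KP_gens[OF i] gen_carrier by (simp add: cv_def TH.hom_cm)
  also have "\<dots> = (0, B (dl (fst (KP ! i))) (dl (snd (KP ! i))) - B (dl (snd (KP ! i))) (dl (fst (KP ! i))))"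
    using KP_gens[OF i] by (simp add: th_gen cm_NG)
  also have "\<dots> = (0, e i)"
  proof -
    have "i \<in> {0,1,2,3,4,5,6,7,8}" using i by auto
    then show ?thesis
      by (simp only: bet_dl) (elim insertE emptyE; simp add: KP_def PL_def e_def fun_eq_iff)
  qed
  finally show ?thesis .
qed

lemma th_G2: "x \<in> V.G2 \<Longrightarrow> fst (th x) = 0"
  unfolding V.G2_def
proof (induction x rule: generate.induct)
  case one then show ?case by (simp add: NG_simps)
next
  case (incl h) then show ?case by (auto simp: V.A2_def TH.hom_cm fst_cm_NG)
next
  case (inv h)
  then have "h \<in> carrier VP3" using V.A2_sub by auto
  moreover have "fst (th h) = 0" using inv by (auto simp: V.A2_def TH.hom_cm fst_cm_NG)
  ultimately show ?case by (cases "th h") (simp add: inv_NG)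
next
  case (eng h1 h2)
  then have "h1 \<in> carrier VP3" "h2 \<in> carrier VP3" using V.generate_in_carrier[OF V.A2_sub] by auto
  then show ?case using eng by (simp add: NG_simps Nm_def)
qed

lemma th_G3: "x \<in> V.G3 \<Longrightarrow> th x = (0, 0)"
  unfolding V.G3_def
proof (induction x rule: generate.induct)
  case one then show ?case by (simp add: NG_simps fun_eq_iff)
next
  case (incl h)
  then obtain a b where ab: "h = cm VP3 a b" "a \<in> V.G2" "b \<in> carrier VP3" by (auto simp: V.A3_def)
  have "th a = (0, snd (th a))" using th_G2[OF ab(2)] by (cases "th a") simp
  have "th h = cm NG (th a) (th b)" using ab V.G2_carrier by (simp add: TH.hom_cm)
  also have "\<dots> = (0, 0)" by (subst \<open>th a = _\<close>) (rule cm_NG_cen)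
  finally show ?case .
next
  case (inv h)
  then obtain a b where ab: "h = cm VP3 a b" "a \<in> V.G2" "b \<in> carrier VP3" by (auto simp: V.A3_def)
  have "th a = (0, snd (th a))" using th_G2[OF ab(2)] by (cases "th a") simp
  have "th h = cm NG (th a) (th b)" using ab V.G2_carrier by (simp add: TH.hom_cm)
  also have "\<dots> = (0, 0)" by (subst \<open>th a = _\<close>) (rule cm_NG_cen)
  finally have "th h = (0, 0)" .
  moreover have "h \<in> carrier VP3" using inv V.A3_sub by auto
  ultimately show ?case by (simp add: inv_NG bet_zero1 fun_eq_iff)
next
  case (eng h1 h2)
  then have "h1 \<in> carrier VP3" "h2 \<in> carrier VP3" using V.generate_in_carrier[OF V.A3_sub] by auto
  then have "th (h1 \<otimes>\<^bsub>VP3\<^esub> h2) = th h1 \<otimes>\<^bsub>NG\<^esub> th h2" by simp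
  also have "\<dots> = \<one>\<^bsub>NG\<^esub> \<otimes>\<^bsub>NG\<^esub> \<one>\<^bsub>NG\<^esub>" using eng by (simp only: NG_one)
  also have "\<dots> = \<one>\<^bsub>NG\<^esub>" by simp
  finally show ?case by (simp only: NG_one)
qed


abbreviation "QQ \<equiv> VP3 Mod V.G3"

interpretation Qc: class2 QQ by (rule V.Q_class2)

interpretation P: group_hom VP3 QQ "\<lambda>a. V.G3 #>\<^bsub>VP3\<^esub> a" by (rule V.pi_group_hom)

definition gq :: "nat \<times> nat \<Rightarrow> ((nat \<times> nat) \<times> bool) list set set" where
  "gq p = V.G3 #>\<^bsub>VP3\<^esub> gen p"

definition cb :: "nat \<Rightarrow> ((nat \<times> nat) \<times> bool) list set set" where
  "cb i = V.G3 #>\<^bsub>VP3\<^esub> cv i"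

definition TT :: "((nat \<times> nat) \<times> bool) list set set set" where
  "TT = generate QQ (cb ` {..<9})"

definition thQ :: "((nat \<times> nat) \<times> bool) list set set \<Rightarrow> nel" where
  "thQ U = th (SOME x. x \<in> U)"

definition rho :: "(nat \<Rightarrow> int) \<Rightarrow> ((nat \<times> nat) \<times> bool) list set set" where
  "rho z = rl QQ [0..<9] cb z"

lemma gq_carrier: "p \<in> vp3_gens \<Longrightarrow> gq p \<in> carrier QQ"
  unfolding gq_def using gen_carrier P.hom_closed by blast

lemma cb_eq: "i < 9 \<Longrightarrow> cb i = cm QQ (gq (fst (KP ! i))) (gq (snd (KP ! i)))"
  unfolding cb_def gq_def cv_def using KP_gens gen_carrier by (simp add: P.hom_cm)

lemma cb_carrier: "i < 9 \<Longrightarrow> cb i \<in> carrier QQ"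
  unfolding cb_def using cv_carrier P.hom_closed by blast

lemma cb_central: "i < 9 \<Longrightarrow> cb i \<in> carrier QQ \<and> (\<forall>y\<in>carrier QQ. cb i \<otimes>\<^bsub>QQ\<^esub> y = y \<otimes>\<^bsub>QQ\<^esub> cb i)"
  using cb_carrier cb_eq Qc.cen KP_gens gq_carrier by metis

lemma cb_sub: "cb ` {..<9} \<subseteq> carrier QQ" using cb_carrier by auto

lemma TT_subgroup: "subgroup TT QQ"
  unfolding TT_def by (rule Qc.generate_is_subgroup[OF cb_sub])

lemma thQ_pi: "x \<in> carrier VP3 \<Longrightarrow> thQ (V.G3 #>\<^bsub>VP3\<^esub> x) = th x"
proof -
  assume x: "x \<in> carrier VP3"
  have "x \<in> V.G3 #>\<^bsub>VP3\<^esub> x" using V.rcos_self[OF x V.G3_subgroup] .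
  then have "(SOME y. y \<in> V.G3 #>\<^bsub>VP3\<^esub> x) \<in> V.G3 #>\<^bsub>VP3\<^esub> x" by (rule someI)
  then obtain h where h: "h \<in> V.G3" "(SOME y. y \<in> V.G3 #>\<^bsub>VP3\<^esub> x) = h \<otimes>\<^bsub>VP3\<^esub> x"
    by (auto simp: r_coset_def)
  have hc: "h \<in> carrier VP3" using h(1) V.A3_sub V.G3_def V.generate_in_carrier by blast
  have "th (h \<otimes>\<^bsub>VP3\<^esub> x) = th h \<otimes>\<^bsub>NG\<^esub> th x" using hc x by simp
  also have "\<dots> = \<one>\<^bsub>NG\<^esub> \<otimes>\<^bsub>NG\<^esub> th x" using th_G3[OF h(1)] by (simp only: NG_one)
  also have "\<dots> = th x" by simp
  finally show ?thesis unfolding thQ_def h(2) .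
qed

lemma Q_elem: "U \<in> carrier QQ \<Longrightarrow> \<exists>x\<in>carrier VP3. U = V.G3 #>\<^bsub>VP3\<^esub> x"
  by (auto simp: carrier_FactGroup)

lemma thQ_mult: "U \<in> carrier QQ \<Longrightarrow> W \<in> carrier QQ \<Longrightarrow> thQ (U \<otimes>\<^bsub>QQ\<^esub> W) = thQ U \<otimes>\<^bsub>NG\<^esub> thQ W"
proof -
  assume "U \<in> carrier QQ" "W \<in> carrier QQ"
  then obtain x y where xy: "x \<in> carrier VP3" "y \<in> carrier VP3" "U = V.G3 #>\<^bsub>VP3\<^esub> x" "W = V.G3 #>\<^bsub>VP3\<^esub> y"
    using Q_elem by metis
  have "U \<otimes>\<^bsub>QQ\<^esub> W = V.G3 #>\<^bsub>VP3\<^esub> (x \<otimes>\<^bsub>VP3\<^esub> y)" using xy P.hom_mult by simp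
  then have "thQ (U \<otimes>\<^bsub>QQ\<^esub> W) = th (x \<otimes>\<^bsub>VP3\<^esub> y)" using xy by (simp only: thQ_pi V.m_closed)
  also have "\<dots> = th x \<otimes>\<^bsub>NG\<^esub> th y" using xy by simp
  finally show ?thesis using xy by (simp only: thQ_pi)
qed

lemma thQ_inv: "U \<in> carrier QQ \<Longrightarrow> thQ (inv\<^bsub>QQ\<^esub> U) = inv\<^bsub>NG\<^esub> (thQ U)"
proof -
  assume "U \<in> carrier QQ"
  then obtain x where x: "x \<in> carrier VP3" "U = V.G3 #>\<^bsub>VP3\<^esub> x" using Q_elem by metis
  have "inv\<^bsub>QQ\<^esub> U = V.G3 #>\<^bsub>VP3\<^esub> (inv\<^bsub>VP3\<^esub> x)" using x P.hom_inv by simp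
  then have "thQ (inv\<^bsub>QQ\<^esub> U) = th (inv\<^bsub>VP3\<^esub> x)" using x by (simp only: thQ_pi V.inv_closed)
  also have "\<dots> = inv\<^bsub>NG\<^esub> (th x)" using x by simp
  finally show ?thesis using x by (simp only: thQ_pi)
qed

lemma thQ_one: "thQ \<one>\<^bsub>QQ\<^esub> = \<one>\<^bsub>NG\<^esub>"
proof -
  have "\<one>\<^bsub>QQ\<^esub> = V.G3 #>\<^bsub>VP3\<^esub> \<one>\<^bsub>VP3\<^esub>" using P.hom_one by simp
  then have "thQ \<one>\<^bsub>QQ\<^esub> = th \<one>\<^bsub>VP3\<^esub>" by (simp only: thQ_pi V.one_closed)
  then show ?thesis by simp
qed

lemma thQ_cb: "i < 9 \<Longrightarrow> thQ (cb i) = (0, e i)"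
  unfolding cb_def using cv_carrier thQ_pi th_cv by simp

lemma rho_e: "i < 9 \<Longrightarrow> rho (e i) = cb i"
  unfolding rho_def e_def by (rule Qc.rl_e) (auto simp: cb_carrier)

lemma rho_neg: "rho (- z) = inv\<^bsub>QQ\<^esub> (rho z)"
  unfolding rho_def by (rule Qc.rl_neg) (use cb_central in auto)

lemma rho_add: "rho (z + w) = rho z \<otimes>\<^bsub>QQ\<^esub> rho w"
  unfolding rho_def by (rule Qc.rl_add) (use cb_central in auto)

lemma rho_zero: "(\<And>j. j < 9 \<Longrightarrow> z j = 0) \<Longrightarrow> rho z = \<one>\<^bsub>QQ\<^esub>"
  unfolding rho_def by (rule Qc.rl_zero) auto

lemma TT_carrier: "t \<in> TT \<Longrightarrow> t \<in> carrier QQ"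
  unfolding TT_def using Qc.generate_in_carrier[OF cb_sub] by blast

lemma K3: "t \<in> TT \<Longrightarrow> fst (thQ t) = 0 \<and> t = rho (snd (thQ t))"
  unfolding TT_def
proof (induction t rule: generate.induct)
  case one
  have "rho (snd (thQ \<one>\<^bsub>QQ\<^esub>)) = \<one>\<^bsub>QQ\<^esub>" by (rule rho_zero) (simp only: thQ_one NG_one, simp)
  then show ?case by (simp only: thQ_one NG_one, simp)
next
  case (incl h)
  then obtain i where i: "i < 9" "h = cb i" by auto
  then show ?case by (simp add: thQ_cb rho_e)
next
  case (inv h)
  then obtain i where i: "i < 9" "h = cb i" by auto
  have "thQ (inv\<^bsub>QQ\<^esub> h) = (0, - e i)"
    using i cb_carrier by (simp add: thQ_inv thQ_cb inv_NG bet_zero1)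
  moreover have "rho (- e i) = inv\<^bsub>QQ\<^esub> h" using i by (simp add: rho_neg rho_e)
  ultimately show ?case by (metis fst_conv snd_conv)
next
  case (eng h1 h2)
  have c: "h1 \<in> carrier QQ" "h2 \<in> carrier QQ" using eng TT_carrier TT_def by auto
  have f: "fst (thQ h1) = 0" "fst (thQ h2) = 0" using eng by auto
  have "thQ (h1 \<otimes>\<^bsub>QQ\<^esub> h2) = (fst (thQ h1) + fst (thQ h2), snd (thQ h1) + snd (thQ h2) + B (fst (thQ h1)) (fst (thQ h2)))"
    by (simp only: thQ_mult[OF c] NG_mult Nm_def)
  also have "\<dots> = (0, snd (thQ h1) + snd (thQ h2))" using f by (simp add: bet_zero1)
  finally have t: "thQ (h1 \<otimes>\<^bsub>QQ\<^esub> h2) = (0, snd (thQ h1) + snd (thQ h2))" .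
  have "h1 \<otimes>\<^bsub>QQ\<^esub> h2 = rho (snd (thQ h1)) \<otimes>\<^bsub>QQ\<^esub> rho (snd (thQ h2))" using eng by auto
  moreover have "rho (snd (thQ (h1 \<otimes>\<^bsub>QQ\<^esub> h2))) = rho (snd (thQ h1)) \<otimes>\<^bsub>QQ\<^esub> rho (snd (thQ h2))"
    by (simp only: t snd_conv rho_add)
  ultimately show ?case using t by (metis fst_conv)
qed


abbreviation "KK p q \<equiv> cm QQ (gq p) (gq q)"

lemma cls3: "valid [a, b, c] \<Longrightarrow> cls [a] \<otimes>\<^bsub>VP3\<^esub> cls [b] \<otimes>\<^bsub>VP3\<^esub> cls [c] = cls [a, b, c]"
  by (simp add: mult_VP3)

lemma rel_VP3:
  assumes "i \<in> {1,2,3}" "j \<in> {1,2,3}" "k \<in> {1,2,3}" "i \<noteq> j" "j \<noteq> k" "i \<noteq> k"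
  shows "gen (k,i) \<otimes>\<^bsub>VP3\<^esub> gen (k,j) \<otimes>\<^bsub>VP3\<^esub> gen (i,j) = gen (i,j) \<otimes>\<^bsub>VP3\<^esub> gen (k,j) \<otimes>\<^bsub>VP3\<^esub> gen (k,i)"
proof -
  let ?l = "[((k, i), True), ((k, j), True), ((i, j), True)]"
  let ?r = "[((i, j), True), ((k, j), True), ((k, i), True)]"
  have lr: "(?l, ?r) \<in> vp3_rels" unfolding vp3_rels_def using assms by blast
  have v: "valid ?l" "valid ?r" using rels_valid[OF lr] by auto
  have "peq ([] @ ?l @ []) ([] @ ?r @ [])" by (rule pres_eq.rel[OF lr]) auto
  then have "cls ?l = cls ?r" using v cls_eq by simp
  then show ?thesis unfolding gen_def using v cls3 by metis
qed

lemma rel_Q: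
  assumes "i \<in> {1,2,3}" "j \<in> {1,2,3}" "k \<in> {1,2,3}" "i \<noteq> j" "j \<noteq> k" "i \<noteq> k"
  shows "KK (k,i) (k,j) \<otimes>\<^bsub>QQ\<^esub> KK (k,i) (i,j) \<otimes>\<^bsub>QQ\<^esub> KK (k,j) (i,j) = \<one>\<^bsub>QQ\<^esub>"
proof -
  have g: "(k,i) \<in> vp3_gens" "(k,j) \<in> vp3_gens" "(i,j) \<in> vp3_gens" using assms by (auto simp: vp3_gens_def)
  note gc = gen_carrier[OF g(1)] gen_carrier[OF g(2)] gen_carrier[OF g(3)]
  have "gq (k,i) \<otimes>\<^bsub>QQ\<^esub> gq (k,j) \<otimes>\<^bsub>QQ\<^esub> gq (i,j) = gq (i,j) \<otimes>\<^bsub>QQ\<^esub> gq (k,j) \<otimes>\<^bsub>QQ\<^esub> gq (k,i)"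
    using rel_VP3[OF assms] gc unfolding gq_def by (simp only: P.hom_mult[symmetric] V.m_closed)
  then show ?thesis using gq_carrier[OF g(1)] gq_carrier[OF g(2)] gq_carrier[OF g(3)] by (rule Qc.rel_prod[rotated -1])
qed

lemma mid_TT:
  assumes c: "a \<in> carrier QQ" "b \<in> carrier QQ" "cc \<in> carrier QQ"
    and e: "a \<otimes>\<^bsub>QQ\<^esub> b \<otimes>\<^bsub>QQ\<^esub> cc = \<one>\<^bsub>QQ\<^esub>" and t: "a \<in> TT" "cc \<in> TT"
  shows "b \<in> TT"
proof -
  have ab: "a \<otimes>\<^bsub>QQ\<^esub> b \<in> carrier QQ" using c Qc.m_closed by blast
  have i: "inv\<^bsub>QQ\<^esub> cc = a \<otimes>\<^bsub>QQ\<^esub> b" by (rule Qc.inv_equality[OF e c(3) ab])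
  have "inv\<^bsub>QQ\<^esub> a \<otimes>\<^bsub>QQ\<^esub> inv\<^bsub>QQ\<^esub> cc = inv\<^bsub>QQ\<^esub> a \<otimes>\<^bsub>QQ\<^esub> (a \<otimes>\<^bsub>QQ\<^esub> b)" by (simp only: i)
  also have "\<dots> = b" by (rule Qc.cancel2[OF c(1,2)])
  finally have "b = inv\<^bsub>QQ\<^esub> a \<otimes>\<^bsub>QQ\<^esub> inv\<^bsub>QQ\<^esub> cc" by simp
  then show ?thesis using t TT_subgroup by (metis subgroup.m_closed subgroup.m_inv_closed)
qed

lemma mid_rel:
  assumes "i \<in> {1,2,3}" "j \<in> {1,2,3}" "k \<in> {1,2,3}" "i \<noteq> j" "j \<noteq> k" "i \<noteq> k"
    and "KK (k,i) (k,j) \<in> TT" "KK (k,j) (i,j) \<in> TT"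
  shows "KK (k,i) (i,j) \<in> TT"
proof -
  have g: "(k,i) \<in> vp3_gens" "(k,j) \<in> vp3_gens" "(i,j) \<in> vp3_gens" using assms by (auto simp: vp3_gens_def)
  note gc = gq_carrier[OF g(1)] gq_carrier[OF g(2)] gq_carrier[OF g(3)]
  show ?thesis
    by (rule mid_TT[OF Qc.cm_closed[OF gc(1,2)] Qc.cm_closed[OF gc(1,3)] Qc.cm_closed[OF gc(2,3)]
          rel_Q[OF assms(1-6)] assms(7,8)])
qed

lemma K_kept: "i < 9 \<Longrightarrow> KK (fst (KP ! i)) (snd (KP ! i)) \<in> TT"
  using cb_eq[of i] by (auto simp: TT_def intro: generate.incl)

lemma K_rev: "p \<in> vp3_gens \<Longrightarrow> q \<in> vp3_gens \<Longrightarrow> KK p q \<in> TT \<Longrightarrow> KK q p \<in> TT"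
  using Qc.cm_inv[OF gq_carrier gq_carrier] TT_subgroup subgroup.m_inv_closed by metis

lemma K_diag: "p \<in> vp3_gens \<Longrightarrow> KK p p \<in> TT"
  using gq_carrier[of p] TT_subgroup subgroup.one_closed Qc.cm_one_iff by metis

lemma g_in: "(1,2) \<in> vp3_gens" "(1,3) \<in> vp3_gens" "(2,1) \<in> vp3_gens" "(2,3) \<in> vp3_gens"
   "(3,1) \<in> vp3_gens" "(3,2) \<in> vp3_gens" by (auto simp: vp3_gens_def)

lemma kk0: "KK (1,2) (2,1) \<in> TT" using K_kept[of 0] by (simp add: KP_def)
lemma kk1: "KK (1,2) (1,3) \<in> TT" using K_kept[of 1] by (simp add: KP_def)
lemma kk2: "KK (1,2) (3,2) \<in> TT" using K_kept[of 2] by (simp add: KP_def)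
lemma kk3: "KK (2,1) (3,1) \<in> TT" using K_kept[of 3] by (simp add: KP_def)
lemma kk4: "KK (2,1) (2,3) \<in> TT" using K_kept[of 4] by (simp add: KP_def)
lemma kk5: "KK (1,3) (3,1) \<in> TT" using K_kept[of 5] by (simp add: KP_def)
lemma kk6: "KK (1,3) (2,3) \<in> TT" using K_kept[of 6] by (simp add: KP_def)
lemma kk7: "KK (3,1) (3,2) \<in> TT" using K_kept[of 7] by (simp add: KP_def)
lemma kk8: "KK (2,3) (3,2) \<in> TT" using K_kept[of 8] by (simp add: KP_def)

lemma ke1: "KK (3,1) (1,2) \<in> TT"
  by (rule mid_rel[OF _ _ _ _ _ _ kk7 K_rev[OF g_in(1) g_in(6) kk2]]) simp_all
lemma ke2: "KK (3,2) (2,1) \<in> TT"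
  by (rule mid_rel[OF _ _ _ _ _ _ K_rev[OF g_in(5) g_in(6) kk7] K_rev[OF g_in(3) g_in(5) kk3]]) simp_all
lemma ke3: "KK (2,1) (1,3) \<in> TT"
  by (rule mid_rel[OF _ _ _ _ _ _ kk4 K_rev[OF g_in(2) g_in(4) kk6]]) simp_all
lemma ke4: "KK (2,3) (3,1) \<in> TT"
  by (rule mid_rel[OF _ _ _ _ _ _ K_rev[OF g_in(3) g_in(4) kk4] kk3]) simp_all
lemma ke5: "KK (1,2) (2,3) \<in> TT"
  by (rule mid_rel[OF _ _ _ _ _ _ kk1 kk6]) simp_all
lemma ke6: "KK (1,3) (3,2) \<in> TT"
  by (rule mid_rel[OF _ _ _ _ _ _ K_rev[OF g_in(1) g_in(2) kk1] kk2]) simp_all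

lemma K_all: "p \<in> vp3_gens \<Longrightarrow> q \<in> vp3_gens \<Longrightarrow> KK p q \<in> TT"
proof -
  assume pq: "p \<in> vp3_gens" "q \<in> vp3_gens"
  have "KK p q \<in> TT \<or> KK q p \<in> TT \<or> p = q"
    using pq unfolding vp3_gens_eq
    by (elim insertE emptyE) (simp_all only: kk0 kk1 kk2 kk3 kk4 kk5 kk6 kk7 kk8 ke1 ke2 ke3 ke4 ke5 ke6 simp_thms prod.inject)
  then show ?thesis using pq K_rev K_diag by metis
qed


abbreviation "GQ \<equiv> gq ` vp3_gens"

lemma GQ_sub: "GQ \<subseteq> carrier QQ" using gq_carrier by auto

lemma gen_inv: "p \<in> vp3_gens \<Longrightarrow> cls [(p, False)] = inv\<^bsub>VP3\<^esub> (gen p)"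
proof -
  assume p: "p \<in> vp3_gens"
  have "peq ([] @ [(p, False), (p, \<not> False)] @ []) ([] @ [])" by (rule pres_eq.cancel) (use p in auto)
  then have "cls [(p, False)] \<otimes>\<^bsub>VP3\<^esub> gen p = \<one>\<^bsub>VP3\<^esub>"
    using p by (simp add: gen_def mult_VP3 one_VP3 cls_eq)
  moreover have "cls [(p, False)] \<in> carrier VP3" using p by (auto simp: carrier_VP3)
  ultimately show ?thesis using gen_carrier[OF p] by (metis V.inv_equality)
qed

lemma Qgen_w: "valid w \<Longrightarrow> V.G3 #>\<^bsub>VP3\<^esub> cls w \<in> generate QQ GQ"
proof (induction w)
  case Nil
  have "V.G3 #>\<^bsub>VP3\<^esub> cls [] = \<one>\<^bsub>QQ\<^esub>" using P.hom_one by (simp only: one_VP3)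
  then show ?case by (simp only: generate.one)
next
  case (Cons x w)
  obtain p b where x: "x = (p, b)" by (cases x) auto
  have p: "p \<in> vp3_gens" and w: "valid w" using Cons.prems x by auto
  have "cls (x # w) = cls [x] \<otimes>\<^bsub>VP3\<^esub> cls w" using Cons.prems by (simp add: mult_VP3)
  moreover have cx: "cls [x] \<in> carrier VP3" "cls w \<in> carrier VP3" using Cons.prems by (auto simp: carrier_VP3)
  ultimately have e: "V.G3 #>\<^bsub>VP3\<^esub> cls (x # w) = (V.G3 #>\<^bsub>VP3\<^esub> cls [x]) \<otimes>\<^bsub>QQ\<^esub> (V.G3 #>\<^bsub>VP3\<^esub> cls w)"
    by (simp only: P.hom_mult)
  have "V.G3 #>\<^bsub>VP3\<^esub> cls [x] \<in> generate QQ GQ"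
  proof (cases b)
    case True
    then have "V.G3 #>\<^bsub>VP3\<^esub> cls [x] = gq p" by (simp add: x gq_def gen_def)
    then show ?thesis using p by (auto intro: generate.incl)
  next
    case False
    then have "V.G3 #>\<^bsub>VP3\<^esub> cls [x] = V.G3 #>\<^bsub>VP3\<^esub> (inv\<^bsub>VP3\<^esub> (gen p))" by (simp add: x gen_inv[OF p])
    also have "\<dots> = inv\<^bsub>QQ\<^esub> (gq p)" unfolding gq_def using gen_carrier[OF p] by (rule P.hom_inv)
    finally show ?thesis using p by (auto intro: generate.inv)
  qed
  then show ?case using e Cons.IH[OF w] by (simp only: generate.eng)
qed

lemma Q_gen: "U \<in> carrier QQ \<Longrightarrow> U \<in> generate QQ GQ"
proof -
  assume "U \<in> carrier QQ"
  then obtain x where x: "x \<in> carrier VP3" "U = V.G3 #>\<^bsub>VP3\<^esub> x" using Q_elem by blast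
  then obtain w where "valid w" "x = cls w" by (auto simp: carrier_VP3)
  then show ?thesis using x Qgen_w by simp
qed

lemma step1: "U \<in> generate QQ GQ \<Longrightarrow> h \<in> GQ \<Longrightarrow> cm QQ U h \<in> TT"
proof (induction U rule: generate.induct)
  case one
  have hc: "h \<in> carrier QQ" using one GQ_sub by blast
  have "cm QQ \<one>\<^bsub>QQ\<^esub> h = \<one>\<^bsub>QQ\<^esub>" by (rule Qc.cm_one_left[OF hc])
  then show ?case by (simp only: subgroup.one_closed[OF TT_subgroup])
next
  case (incl u)
  then show ?case using K_all by auto
next
  case (inv u)
  then obtain p q where pq: "p \<in> vp3_gens" "q \<in> vp3_gens" "u = gq p" "h = gq q" by auto
  have "cm QQ (inv\<^bsub>QQ\<^esub> u) h = inv\<^bsub>QQ\<^esub> (cm QQ u h)"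
    using pq gq_carrier by (simp only: Qc.cm_inv_left)
  moreover have "cm QQ u h \<in> TT" using pq K_all by simp
  ultimately show ?case using subgroup.m_inv_closed[OF TT_subgroup] by simp
next
  case (eng u1 u2)
  have c: "u1 \<in> carrier QQ" "u2 \<in> carrier QQ" "h \<in> carrier QQ"
    using eng Qc.generate_in_carrier[OF GQ_sub] GQ_sub by auto
  have "cm QQ u1 h \<in> TT" "cm QQ u2 h \<in> TT" using eng by auto
  then have "cm QQ u2 h \<otimes>\<^bsub>QQ\<^esub> cm QQ u1 h \<in> TT" using subgroup.m_closed[OF TT_subgroup] by blast
  then show ?case by (simp only: Qc.cm_mult_left[OF c])
qed

lemma step2: "W \<in> generate QQ GQ \<Longrightarrow> U \<in> carrier QQ \<Longrightarrow> cm QQ U W \<in> TT"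
proof (induction W rule: generate.induct)
  case one
  have "cm QQ U \<one>\<^bsub>QQ\<^esub> = \<one>\<^bsub>QQ\<^esub>" by (rule Qc.cm_one_right[OF one])
  then show ?case by (simp only: subgroup.one_closed[OF TT_subgroup])
next
  case (incl u)
  then show ?case using step1 Q_gen by auto
next
  case (inv u)
  then have a: "cm QQ U u \<in> TT" using step1 Q_gen by auto
  have uc: "u \<in> carrier QQ" using inv GQ_sub by blast
  have "cm QQ U (inv\<^bsub>QQ\<^esub> u) = inv\<^bsub>QQ\<^esub> (cm QQ U u)" by (rule Qc.cm_inv_right[OF inv.prems uc])
  then show ?case using a subgroup.m_inv_closed[OF TT_subgroup] by simp
next
  case (eng u1 u2)
  have c: "U \<in> carrier QQ" "u1 \<in> carrier QQ" "u2 \<in> carrier QQ"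
    using eng Qc.generate_in_carrier[OF GQ_sub] by auto
  have "cm QQ U u1 \<in> TT" "cm QQ U u2 \<in> TT" using eng by auto
  then have "cm QQ U u1 \<otimes>\<^bsub>QQ\<^esub> cm QQ U u2 \<in> TT" using subgroup.m_closed[OF TT_subgroup] by blast
  then show ?case by (simp only: Qc.cm_mult_right[OF c])
qed

lemma K2: "U \<in> carrier QQ \<Longrightarrow> W \<in> carrier QQ \<Longrightarrow> cm QQ U W \<in> TT"
  using step2 Q_gen by blast

lemma piG2: "x \<in> V.G2 \<Longrightarrow> V.G3 #>\<^bsub>VP3\<^esub> x \<in> TT"
proof -
  assume x: "x \<in> V.G2"
  have sub: "(\<lambda>a. V.G3 #>\<^bsub>VP3\<^esub> a) ` V.A2 \<subseteq> TT"
  proof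
    fix c assume "c \<in> (\<lambda>a. V.G3 #>\<^bsub>VP3\<^esub> a) ` V.A2"
    then obtain a b where ab: "a \<in> carrier VP3" "b \<in> carrier VP3" "c = V.G3 #>\<^bsub>VP3\<^esub> cm VP3 a b"
      by (auto simp: V.A2_def)
    then have "c = cm QQ (V.G3 #>\<^bsub>VP3\<^esub> a) (V.G3 #>\<^bsub>VP3\<^esub> b)" by (simp add: P.hom_cm)
    then show "c \<in> TT" using ab K2 P.hom_closed by metis
  qed
  have "V.G3 #>\<^bsub>VP3\<^esub> x \<in> (\<lambda>a. V.G3 #>\<^bsub>VP3\<^esub> a) ` generate VP3 V.A2" using x V.G2_def by auto
  also have "\<dots> = generate QQ ((\<lambda>a. V.G3 #>\<^bsub>VP3\<^esub> a) ` V.A2)" by (rule P.generate_img[OF V.A2_sub, symmetric])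
  also have "\<dots> \<subseteq> TT" by (rule Qc.generate_subgroup_incl[OF sub TT_subgroup])
  finally show ?thesis .
qed


lemma rl_cong_f: "(\<And>i. i \<in> set l \<Longrightarrow> f i = g i) \<Longrightarrow> rl G l f z = rl G l g z"
  by (induction l) auto

lemma NG_pow_nat: "(0, z) [^]\<^bsub>NG\<^esub> (k::nat) = (0, \<lambda>j. int k * z j)"
proof (induction k)
  case 0 then show ?case by (simp add: NG_one fun_eq_iff)
next
  case (Suc k)
  have "(0, z) [^]\<^bsub>NG\<^esub> Suc k = (0, z) [^]\<^bsub>NG\<^esub> k \<otimes>\<^bsub>NG\<^esub> (0, z)" by simp
  also have "\<dots> = Nm (0, \<lambda>j. int k * z j) (0, z)" by (simp only: Suc.IH NG_mult)
  also have "\<dots> = (0, \<lambda>j. int (Suc k) * z j)"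
    by (simp add: Nm_def bet_zero1) (rule ext, simp add: algebra_simps)
  finally show ?case .
qed

lemma NG_pow_int: "(0, z) [^]\<^bsub>NG\<^esub> (n::int) = (0, \<lambda>j. n * z j)"
proof (cases "n < 0")
  case True
  have "(0, z) [^]\<^bsub>NG\<^esub> n = inv\<^bsub>NG\<^esub> ((0, z) [^]\<^bsub>NG\<^esub> (nat (- n)))"
    by (simp only: int_pow_def2 True if_True)
  also have "\<dots> = inv\<^bsub>NG\<^esub> (0, \<lambda>j. int (nat (- n)) * z j)" by (simp only: NG_pow_nat)
  also have "\<dots> = (0, \<lambda>j. n * z j)"
    using True by (simp add: inv_NG bet_zero1) (simp add: fun_eq_iff)
  finally show ?thesis .
next
  case False
  have "(0, z) [^]\<^bsub>NG\<^esub> n = (0, z) [^]\<^bsub>NG\<^esub> (nat n)"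
    by (simp only: int_pow_def2 False if_False)
  also have "\<dots> = (0, \<lambda>j. int (nat n) * z j)" by (simp only: NG_pow_nat)
  also have "\<dots> = (0, \<lambda>j. n * z j)" using False by simp
  finally show ?thesis .
qed

lemma NG_rl: "distinct l \<Longrightarrow> rl NG l (\<lambda>i. (0, e i)) v = (0, \<lambda>j. if j \<in> set l then v j else 0)"
proof (induction l)
  case Nil then show ?case by (simp add: NG_one fun_eq_iff)
next
  case (Cons i l)
  have IH: "rl NG l (\<lambda>i. (0, e i)) v = (0, \<lambda>j. if j \<in> set l then v j else 0)"
    by (rule Cons.IH) (use Cons.prems in simp)
  have ni: "i \<notin> set l" using Cons.prems by simp
  have "rl NG (i # l) (\<lambda>i. (0, e i)) v = (0, e i) [^]\<^bsub>NG\<^esub> v i \<otimes>\<^bsub>NG\<^esub> rl NG l (\<lambda>i. (0, e i)) v"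
    by simp
  also have "\<dots> = Nm (0, \<lambda>j. v i * e i j) (0, \<lambda>j. if j \<in> set l then v j else 0)"
    by (simp only: IH NG_pow_int NG_mult)
  also have "\<dots> = (0, \<lambda>j. if j \<in> set (i # l) then v j else 0)"
    using ni by (simp add: Nm_def bet_zero1) (rule ext, auto simp: e_def)
  finally show ?case .
qed

definition hh :: "((nat \<times> nat) \<times> bool) list set \<Rightarrow> nat \<Rightarrow> int" where
  "hh x = restrict (snd (th x)) {..<9}"

abbreviation "Z9 \<equiv> product_group {..<(9::nat)} (\<lambda>_. integer_group)"
abbreviation "H2 \<equiv> VP3\<lparr>carrier := V.G2\<rparr>"

lemma group_Z9: "group Z9" by (rule product_group) simp

lemma group_H2: "group H2" by (rule V.subgroup_imp_group[OF V.G2_subgroup])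

lemma th_mult_G2: "x \<in> V.G2 \<Longrightarrow> y \<in> V.G2 \<Longrightarrow> snd (th (x \<otimes>\<^bsub>VP3\<^esub> y)) = snd (th x) + snd (th y)"
proof -
  assume xy: "x \<in> V.G2" "y \<in> V.G2"
  have c: "x \<in> carrier VP3" "y \<in> carrier VP3" using xy V.G2_carrier by auto
  have "th (x \<otimes>\<^bsub>VP3\<^esub> y) = Nm (th x) (th y)" using c by (simp add: NG_mult)
  then show ?thesis using th_G2[OF xy(1)] th_G2[OF xy(2)] by (simp add: Nm_def bet_zero1)
qed

lemma hh_hom: "hh \<in> hom H2 Z9"
  unfolding hom_def
proof (safe)
  fix x assume "x \<in> carrier H2"
  then show "hh x \<in> carrier Z9" by (simp add: hh_def)
next
  fix x y assume xy: "x \<in> carrier H2" "y \<in> carrier H2"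
  then show "hh (x \<otimes>\<^bsub>H2\<^esub> y) = hh x \<otimes>\<^bsub>Z9\<^esub> hh y"
    by (simp add: hh_def th_mult_G2 fun_eq_iff)
qed

lemma cv_G2: "i < 9 \<Longrightarrow> cv i \<in> V.G2"
  unfolding V.G2_def V.A2_def cv_def using KP_gens gen_carrier by (blast intro: generate.incl)

lemma hh_surj: "hh ` carrier H2 = carrier Z9"
proof
  show "hh ` carrier H2 \<subseteq> carrier Z9" using hh_hom by (auto simp: hom_def)
next
  show "carrier Z9 \<subseteq> hh ` carrier H2"
  proof
    fix v assume v: "v \<in> carrier Z9"
    define xv where "xv = rl VP3 [0..<9] cv v"
    have xG2: "xv \<in> V.G2" unfolding xv_def by (rule V.rl_sub[OF V.G2_subgroup]) (simp add: cv_G2)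
    have "th xv = rl NG [0..<9] (th \<circ> cv) v" unfolding xv_def by (rule TH.hom_rl) (simp add: cv_carrier)
    also have "\<dots> = rl NG [0..<9] (\<lambda>i. (0, e i)) v" by (rule rl_cong_f) (simp add: th_cv)
    also have "\<dots> = (0, \<lambda>j. if j \<in> set [0..<9] then v j else 0)" by (rule NG_rl) simp
    finally have "hh xv = restrict (\<lambda>j. if j \<in> set [0..<9] then v j else 0) {..<9}" by (simp add: hh_def)
    also have "\<dots> = restrict v {..<9}" by (rule restrict_ext) simp
    also have "\<dots> = v" using v by simp
    finally show "v \<in> hh ` carrier H2" using xG2 by force
  qed
qed

lemma hh_kernel: "kernel H2 Z9 hh = V.G3"
proof
  show "kernel H2 Z9 hh \<subseteq> V.G3"
  proof
    fix x assume "x \<in> kernel H2 Z9 hh"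
    then have x: "x \<in> V.G2" "hh x = (\<lambda>i\<in>{..<9}. 0)" by (auto simp: kernel_def)
    have xc: "x \<in> carrier VP3" using x V.G2_carrier by auto
    have z: "snd (th x) j = 0" if "j < 9" for j
      using fun_cong[OF x(2), of j] that by (simp add: hh_def)
    have "V.G3 #>\<^bsub>VP3\<^esub> x = rho (snd (thQ (V.G3 #>\<^bsub>VP3\<^esub> x)))" using K3[OF piG2[OF x(1)]] by simp
    also have "\<dots> = rho (snd (th x))" by (simp only: thQ_pi[OF xc])
    also have "\<dots> = \<one>\<^bsub>QQ\<^esub>" by (rule rho_zero) (rule z)
    also have "\<dots> = V.G3" by simp
    finally have "V.G3 #>\<^bsub>VP3\<^esub> x = V.G3" .
    then show "x \<in> V.G3" using V.rcos_self[OF xc V.G3_subgroup] by simp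
  qed
next
  show "V.G3 \<subseteq> kernel H2 Z9 hh"
  proof
    fix x assume x: "x \<in> V.G3"
    then have "x \<in> V.G2" using V.G3_G2 by auto
    moreover have "hh x = (\<lambda>i\<in>{..<9}. 0)" using th_G3[OF x] by (simp add: hh_def) (simp add: restrict_def fun_eq_iff)
    ultimately show "x \<in> kernel H2 Z9 hh" by (simp add: kernel_def)
  qed
qed

theorem lemma5p6:
  shows "(VP3\<lparr>carrier := lower_central VP3 2\<rparr>) Mod (lower_central VP3 3)
           \<cong> product_group {..<(9::nat)} (\<lambda>_. integer_group)"
proof -
  interpret HH: group_hom H2 Z9 hh
    by (simp add: group_hom_def group_hom_axioms_def group_H2 group_Z9 hh_hom)
  have "H2 Mod kernel H2 Z9 hh \<cong> Z9" by (rule HH.FactGroup_iso[OF hh_surj])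
  then show ?thesis by (simp only: hh_kernel V.lc2 V.lc3)
qed


end
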